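(* Let $\mathcal{A}$ be an abelian group with $|\mathcal{A}|\ge 3$ and let $G$ be a generalized sun graph. Then $G$ is $\mathcal{A}$-vertex magic if and only if every non-pendant vertex of $G$ is a support vertex. Further, if every non-pendant vertex of $G$ is a support vertex of odd degree, then $G$ is group vertex magic.
   Context: Graphs are finite, simple, undirected. A unicyclic graph is a connected graph with exactly one cycle. A generalized sun is a unicyclic graph $G=(V,E)$ whose unique cycle $C_k$ satisfies $k<|V|$ and such that every vertex not on $C_k$ is pendant (has degree $1$). A support vertex is a vertex adjacent to a pendant vertex. For an additive abelian group $\mathcal{A}$ with identity $0$, a map $\ell:V\to\mathcal{A}\setminus\{0\}$ is an $\mathcal{A}$-vertex magic labeling if there is $\mu\in\mathcal{A}$ with $\sum_{u\in N(v)}\ell(u)=\mu$ for all $v\in V$; $G$ is $\mathcal{A}$-vertex magic if such a labeling exists, and group vertex magic if it is $\mathcal{A}$-vertex magic for every nontrivial abelian group $\mathcal{A}$. *)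

theory Defs
  imports Main
begin

definition simple_graph :: "'v set \<Rightarrow> ('v \<Rightarrow> 'v \<Rightarrow> bool) \<Rightarrow> bool" where
  "simple_graph V E \<longleftrightarrow> finite V \<and> (\<forall>u v. E u v \<longrightarrow> u \<in> V \<and> v \<in> V)
     \<and> (\<forall>u v. E u v \<longrightarrow> E v u) \<and> (\<forall>v. \<not> E v v)"

definition nbhd :: "'v set \<Rightarrow> ('v \<Rightarrow> 'v \<Rightarrow> bool) \<Rightarrow> 'v \<Rightarrow> 'v set" where
  "nbhd V E v = {u \<in> V. E v u}"

definition degree :: "'v set \<Rightarrow> ('v \<Rightarrow> 'v \<Rightarrow> bool) \<Rightarrow> 'v \<Rightarrow> nat" where
  "degree V E v = card (nbhd V E v)"

definition connected_graph :: "'v set \<Rightarrow> ('v \<Rightarrow> 'v \<Rightarrow> bool) \<Rightarrow> bool" where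
  "connected_graph V E \<longleftrightarrow> V \<noteq> {} \<and>
     (\<forall>u\<in>V. \<forall>v\<in>V. (u, v) \<in> {(x, y). E x y}\<^sup>*)"

definition cycle_edges :: "'v list \<Rightarrow> 'v set set" where
  "cycle_edges xs = {{xs ! i, xs ! ((i + 1) mod length xs)} | i. i < length xs}"

definition is_cycle :: "'v set \<Rightarrow> ('v \<Rightarrow> 'v \<Rightarrow> bool) \<Rightarrow> 'v set set \<Rightarrow> bool" where
  "is_cycle V E C \<longleftrightarrow> (\<exists>xs. distinct xs \<and> length xs \<ge> 3 \<and> set xs \<subseteq> V \<and>
     (\<forall>i < length xs. E (xs ! i) (xs ! ((i + 1) mod length xs))) \<and> C = cycle_edges xs)"

definition unicyclic :: "'v set \<Rightarrow> ('v \<Rightarrow> 'v \<Rightarrow> bool) \<Rightarrow> bool" where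
  "unicyclic V E \<longleftrightarrow> simple_graph V E \<and> connected_graph V E \<and> (\<exists>!C. is_cycle V E C)"

definition pendant :: "'v set \<Rightarrow> ('v \<Rightarrow> 'v \<Rightarrow> bool) \<Rightarrow> 'v \<Rightarrow> bool" where
  "pendant V E v \<longleftrightarrow> v \<in> V \<and> degree V E v = 1"

definition support_vertex :: "'v set \<Rightarrow> ('v \<Rightarrow> 'v \<Rightarrow> bool) \<Rightarrow> 'v \<Rightarrow> bool" where
  "support_vertex V E v \<longleftrightarrow> v \<in> V \<and> (\<exists>u\<in>V. E v u \<and> pendant V E u)"

definition generalized_sun :: "'v set \<Rightarrow> ('v \<Rightarrow> 'v \<Rightarrow> bool) \<Rightarrow> bool" where
  "generalized_sun V E \<longleftrightarrow> unicyclic V E \<and>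
     (\<forall>C. is_cycle V E C \<longrightarrow> \<Union>C \<subset> V \<and> (\<forall>v \<in> V - \<Union>C. pendant V E v))"

definition vertex_magic_labeling ::
  "'v set \<Rightarrow> ('v \<Rightarrow> 'v \<Rightarrow> bool) \<Rightarrow> ('v \<Rightarrow> 'a::ab_group_add) \<Rightarrow> bool" where
  "vertex_magic_labeling V E l \<longleftrightarrow> (\<forall>v\<in>V. l v \<noteq> 0) \<and>
     (\<exists>\<mu>. \<forall>v\<in>V. (\<Sum>u\<in>nbhd V E v. l u) = \<mu>)"

definition A_vertex_magic ::
  "'a::ab_group_add itself \<Rightarrow> 'v set \<Rightarrow> ('v \<Rightarrow> 'v \<Rightarrow> bool) \<Rightarrow> bool" where
  "A_vertex_magic A V E \<longleftrightarrow> (\<exists>l :: 'v \<Rightarrow> 'a. vertex_magic_labeling V E l)"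

end

theory Submission
  imports Defs
begin


lemma union_cycle_edges: assumes "xs \<noteq> []" shows "\<Union>(cycle_edges xs) = set xs"
proof
  show "\<Union>(cycle_edges xs) \<subseteq> set xs"
    using assms by (auto simp: cycle_edges_def)
  show "set xs \<subseteq> \<Union>(cycle_edges xs)"
  proof
    fix x assume "x \<in> set xs"
    then obtain i where "i < length xs" "x = xs ! i" by (auto simp: in_set_conv_nth)
    then show "x \<in> \<Union>(cycle_edges xs)" by (auto simp: cycle_edges_def)
  qed
qed

lemma no_chord:
  assumes uni: "\<exists>!C. is_cycle V E C"
    and d: "distinct xs" and l3: "length xs \<ge> 3" and sV: "set xs \<subseteq> V"
    and cy: "\<forall>i<length xs. E (xs!i) (xs!((i+1) mod length xs))"
    and sym: "\<forall>u v. E u v \<longrightarrow> E v u"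
    and ab: "a < b" "b < length xs" "E (xs!a) (xs!b)"
  shows "b = a+1 \<or> (a = 0 \<and> b = length xs - 1)"
proof (rule ccontr)
  assume nc: "\<not> ?thesis"
  let ?n = "length xs"
  define ys where "ys = take (b-a+1) (drop a xs)"
  have len: "length ys = b-a+1" using ab by (simp add: ys_def)
  have ysn: "ys!k = xs!(a+k)" if "k \<le> b-a" for k
    using that ab by (simp add: ys_def)
  have b2: "b \<ge> a+2" using nc ab by auto
  have c1: "is_cycle V E (cycle_edges xs)"
    unfolding is_cycle_def using d l3 sV cy by blast
  have c2: "is_cycle V E (cycle_edges ys)"
    unfolding is_cycle_def
  proof (intro exI conjI)
    show "distinct ys" using d by (simp add: ys_def)
    show "3 \<le> length ys" using len b2 by simp
    show "set ys \<subseteq> V" using sV set_take_subset set_drop_subset unfolding ys_def by fastforce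
    show "\<forall>i<length ys. E (ys ! i) (ys ! ((i + 1) mod length ys))"
    proof (intro allI impI)
      fix k assume k: "k < length ys"
      show "E (ys ! k) (ys ! ((k + 1) mod length ys))"
      proof (cases "k+1 < length ys")
        case True
        then have "(k+1) mod length ys = k+1" by simp
        moreover have "(a+k+1) mod ?n = a+k+1" using True len ab by simp
        moreover have "E (xs!(a+k)) (xs!((a+k+1) mod ?n))" 
        proof -
          have "a+k < ?n" using True len ab by simp
          then show ?thesis using cy by blast
        qed
        ultimately show ?thesis using ysn[of k] ysn[of "k+1"] True len by simp
      next
        case False
        then have "k = b - a" using k len by simp
        moreover have "(k+1) mod length ys = 0"
        proof -
          have "k + 1 = length ys" using False k by simp
          then show ?thesis by simp
        qed
        ultimately show ?thesis using ysn[of k] ysn[of 0] ab sym by auto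
      qed
    qed
  qed simp
  have mem: "{xs!a, xs!b} \<in> cycle_edges ys"
  proof -
    have "(b - a + 1) mod length ys = 0" using len by simp
    then have "{ys!(b-a), ys!((b-a+1) mod length ys)} = {xs!b, xs!a}"
      using ysn[of "b-a"] ysn[of 0] ab by simp
    then have "{xs!a, xs!b} = {ys!(b-a), ys!((b-a+1) mod length ys)} \<and> b-a < length ys"
      using len by (simp add: insert_commute)
    then show ?thesis unfolding cycle_edges_def by blast
  qed
  have nmem: "{xs!a, xs!b} \<notin> cycle_edges xs"
  proof
    assume "{xs!a, xs!b} \<in> cycle_edges xs"
    then obtain k where k: "k < ?n" "{xs!a, xs!b} = {xs!k, xs!((k+1) mod ?n)}"
      unfolding cycle_edges_def by auto
    have km: "(k+1) mod ?n < ?n" using l3 mod_less_divisor[of ?n "k+1"] by linarith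
    from k(2) have "(xs!a = xs!k \<and> xs!b = xs!((k+1) mod ?n)) \<or> (xs!a = xs!((k+1) mod ?n) \<and> xs!b = xs!k)"
      using k(2) by (simp only: doubleton_eq_iff)
    then have "(a = k \<and> b = (k+1) mod ?n) \<or> (a = (k+1) mod ?n \<and> b = k)"
      using nth_eq_iff_index_eq[OF d] k(1) km ab by auto
    then show False
    proof
      assume h: "a = k \<and> b = (k+1) mod ?n"
      have "a + 1 < ?n" using ab by simp
      then show False using h nc by simp
    next
      assume h: "a = (k+1) mod ?n \<and> b = k"
      show False
      proof (cases "b + 1 < ?n")
        case True then show False using h ab by simp
      next
        case False then have bn: "b + 1 = ?n" using ab by simp
        then have "a = 0" using h by simp
        then show False using nc bn by linarith
      qed
    qed
  qed
  have "cycle_edges ys \<noteq> cycle_edges xs" using mem nmem by blast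
  then show False using uni c1 c2 by blast
qed



locale gsun =
  fixes V :: "'v set" and E :: "'v \<Rightarrow> 'v \<Rightarrow> bool" and xs :: "'v list"
  assumes sg: "simple_graph V E"
  and conn: "connected_graph V E"
  and dist: "distinct xs" and len3: "length xs \<ge> 3" and sub: "set xs \<subseteq> V"
  and nonc: "V - set xs \<noteq> {}"
  and cyc: "\<forall>i<length xs. E (xs!i) (xs!((i+1) mod length xs))"
  and nochord: "\<And>a b. a < b \<Longrightarrow> b < length xs \<Longrightarrow> E (xs!a) (xs!b) \<Longrightarrow>
                   b = a+1 \<or> (a = 0 \<and> b = length xs - 1)"
  and pend: "\<forall>v\<in>V - set xs. pendant V E v"

lemma gsun_from:
  assumes "generalized_sun V E" shows "\<exists>xs. gsun V E xs"
proof -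
  have u: "unicyclic V E" using assms by (simp add: generalized_sun_def)
  then have sg: "simple_graph V E" and cn: "connected_graph V E" and uni: "\<exists>!C. is_cycle V E C"
    by (auto simp: unicyclic_def)
  then obtain C where C: "is_cycle V E C" by blast
  then obtain xs where xs: "distinct xs" "length xs \<ge> 3" "set xs \<subseteq> V"
     "\<forall>i<length xs. E (xs!i) (xs!((i+1) mod length xs))" "C = cycle_edges xs"
    unfolding is_cycle_def by blast
  have "xs \<noteq> []" using xs(2) by auto
  then have UC: "\<Union>C = set xs" using xs(5) union_cycle_edges[of xs] by simp
  have gs: "\<Union>C \<subset> V \<and> (\<forall>v \<in> V - \<Union>C. pendant V E v)"
    using assms C by (simp add: generalized_sun_def)
  have sym: "\<forall>u v. E u v \<longrightarrow> E v u" using sg by (simp add: simple_graph_def)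
  have "gsun V E xs"
  proof
    show "simple_graph V E" by (rule sg)
    show "connected_graph V E" by (rule cn)
    show "distinct xs" "3 \<le> length xs" "set xs \<subseteq> V"
      "\<forall>i<length xs. E (xs!i) (xs!((i+1) mod length xs))" using xs by auto
    show "V - set xs \<noteq> {}" using gs UC by blast
    show "\<forall>v\<in>V - set xs. pendant V E v" using gs UC by simp
    show "\<And>a b. a < b \<Longrightarrow> b < length xs \<Longrightarrow> E (xs!a) (xs!b) \<Longrightarrow>
                   b = a+1 \<or> (a = 0 \<and> b = length xs - 1)"
      by (rule no_chord[OF uni xs(1,2,3,4) sym])
  qed
  then show ?thesis by blast
qed

context gsun
begin

abbreviation "n \<equiv> length xs"
definition "nx i = xs!((i+1) mod n)"
definition "pv i = xs!((i+n-1) mod n)"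
definition "P c = nbhd V E c - set xs"

lemma finV: "finite V" using sg by (simp add: simple_graph_def)
lemma symE: "E u v \<Longrightarrow> E v u" using sg by (simp add: simple_graph_def)
lemma EV: "E u v \<Longrightarrow> u \<in> V \<and> v \<in> V" using sg by (simp add: simple_graph_def)
lemma irr: "\<not> E v v" using sg by (simp add: simple_graph_def)
lemma finN: "finite (nbhd V E v)" using finV by (simp add: nbhd_def)
lemma n0: "0 < n" using len3 by linarith

lemma predmod: assumes "i \<noteq> 0" "i < n" shows "(i+n-1) mod n = i - 1"
proof -
  have h: "i+n-1 = (i-1) + n" using assms by simp
  have "(i+n-1) mod n = ((i-1)+n) mod n" by (simp only: h)
  also have "\<dots> = (i-1) mod n" by (rule mod_add_self2)
  also have "\<dots> = i-1" using assms by simp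
  finally show ?thesis .
qed

lemma modlt: "k mod n < n" using n0 by simp

lemma cyc_nbrs: assumes "i < n" shows "E (xs!i) (nx i)" "E (xs!i) (pv i)"
proof -
  show "E (xs!i) (nx i)" using cyc assms by (simp add: nx_def)
  let ?j = "(i+n-1) mod n"
  have "(?j + 1) mod n = i"
  proof (cases "i = 0")
    case True then show ?thesis using n0 by simp
  next
    case False
    then have "(i+n-1) mod n = i - 1"
      using assms by (rule predmod)
    then show ?thesis using False assms by simp
  qed
  then have "E (xs!?j) (xs!i)" using cyc modlt by metis
  then show "E (xs!i) (pv i)" using symE by (simp add: pv_def)
qed

lemma nx_pv: assumes "i < n" shows "nx i \<noteq> pv i"
proof -
  have a: "(i+1) mod n \<noteq> (i+n-1) mod n"
  proof (cases "i = 0")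
    case True then show ?thesis using len3 by simp
  next
    case False
    then have e: "(i+n-1) mod n = i - 1"
      using assms by (rule predmod)
    show ?thesis
    proof (cases "i + 1 < n")
      case True then show ?thesis using e False by simp
    next
      case False
      then have "i + 1 = n" using assms by simp
      then show ?thesis using e len3 by simp
    qed
  qed
  then show ?thesis unfolding nx_def pv_def using nth_eq_iff_index_eq[OF dist] modlt by metis
qed

lemma nbhd_cycle: assumes "i < n" shows "nbhd V E (xs!i) \<inter> set xs = {nx i, pv i}"
proof
  show "{nx i, pv i} \<subseteq> nbhd V E (xs!i) \<inter> set xs"
    using cyc_nbrs[OF assms] EV modlt by (auto simp: nbhd_def nx_def pv_def)
  show "nbhd V E (xs!i) \<inter> set xs \<subseteq> {nx i, pv i}"
  proof
    fix u assume u: "u \<in> nbhd V E (xs!i) \<inter> set xs"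
    then obtain j where j: "j < n" "u = xs!j" by (auto simp: in_set_conv_nth)
    have e: "E (xs!i) (xs!j)" using u j by (simp add: nbhd_def)
    have "j \<noteq> i" using e irr by auto
    then consider "i < j" | "j < i" by linarith
    then show "u \<in> {nx i, pv i}"
    proof cases
      case 1
      then have "j = i+1 \<or> (i = 0 \<and> j = n - 1)" using nochord[OF 1 j(1) e] by simp
      then show ?thesis
      proof
        assume "j = i + 1" then show ?thesis using j by (simp add: nx_def)
      next
        assume "i = 0 \<and> j = n - 1" then show ?thesis using j by (simp add: pv_def)
      qed
    next
      case 2
      have e': "E (xs!j) (xs!i)" using e symE by blast
      then have "i = j+1 \<or> (j = 0 \<and> i = n - 1)" using nochord[OF 2 assms e'] by simp
      then show ?thesis
      proof
        assume h: "i = j + 1"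
        then have "(i+n-1) mod n = j" using j by simp
        then show ?thesis using j by (simp add: pv_def)
      next
        assume h: "j = 0 \<and> i = n - 1"
        then have "(i+1) mod n = j" using n0 by simp
        then show ?thesis using j by (simp add: nx_def)
      qed
    qed
  qed
qed

lemma nbhd_split: assumes "i < n"
  shows "nbhd V E (xs!i) = {nx i, pv i} \<union> P (xs!i)" "{nx i, pv i} \<inter> P (xs!i) = {}"
  using nbhd_cycle[OF assms] by (auto simp: P_def)

lemma P_fin: "finite (P c)" using finN by (simp add: P_def)

lemma cycle_not_pendant: assumes "c \<in> set xs" shows "\<not> pendant V E c"
proof -
  obtain i where i: "i < n" "c = xs!i" using assms by (auto simp: in_set_conv_nth)
  have "{nx i, pv i} \<subseteq> nbhd V E c" using nbhd_split[OF i(1)] i by auto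
  then have "card {nx i, pv i} \<le> degree V E c"
    unfolding degree_def using finN card_mono by blast
  then have "2 \<le> degree V E c" using nx_pv[OF i(1)] by simp
  then show ?thesis by (simp add: pendant_def)
qed

lemma pendant_iff: "v \<in> V \<Longrightarrow> pendant V E v \<longleftrightarrow> v \<notin> set xs"
  using pend cycle_not_pendant by blast

lemma off_nbhd: assumes v: "v \<in> V - set xs" shows "\<exists>c\<in>set xs. nbhd V E v = {c}"
proof -
  have "card (nbhd V E v) = 1" using pend v by (simp add: pendant_def degree_def)
  then obtain c where c: "nbhd V E v = {c}" using card_1_singletonE by blast
  then have Evc: "E v c" "c \<in> V" by (auto simp: nbhd_def)
  have "c \<in> set xs"
  proof (rule ccontr)
    assume cn: "c \<notin> set xs"
    have "card (nbhd V E c) = 1" using pend Evc cn by (simp add: pendant_def degree_def)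
    then obtain d where d: "nbhd V E c = {d}" using card_1_singletonE by blast
    have "v \<in> nbhd V E c" using Evc symE v by (simp add: nbhd_def)
    then have dv: "nbhd V E c = {v}" using d by simp
    have cl: "w \<in> {v, c}" if "(v, w) \<in> {(x, y). E x y}\<^sup>*" for w
      using that
    proof (induction rule: rtrancl_induct)
      case base then show ?case by simp
    next
      case (step y z)
      then have "E y z" by simp
      then have "z \<in> nbhd V E y" using EV by (simp add: nbhd_def)
      then show ?case using step.IH c dv by auto
    qed
    have "xs!0 \<in> V" using sub n0 by auto
    then have "(v, xs!0) \<in> {(x, y). E x y}\<^sup>*" using conn v by (simp add: connected_graph_def)
    then have "xs!0 \<in> {v, c}" using cl by blast
    then show False using v cn n0 by auto
  qed
  then show ?thesis using c by blast
qed

lemma support_iff: assumes "c \<in> set xs" shows "support_vertex V E c \<longleftrightarrow> P c \<noteq> {}"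
proof
  assume "support_vertex V E c"
  then obtain u where "u \<in> V" "E c u" "pendant V E u" by (auto simp: support_vertex_def)
  then show "P c \<noteq> {}" using pendant_iff by (auto simp: P_def nbhd_def)
next
  assume "P c \<noteq> {}"
  then obtain u where "u \<in> V" "E c u" "u \<notin> set xs" by (auto simp: P_def nbhd_def)
  then show "support_vertex V E c" using pendant_iff assms sub by (auto simp: support_vertex_def)
qed

lemma P_nbhd: assumes "c \<in> set xs" "p \<in> P c" shows "nbhd V E p = {c}"
proof -
  have p: "p \<in> V - set xs" "E p c" using assms symE by (auto simp: P_def nbhd_def)
  obtain c' where "nbhd V E p = {c'}" using off_nbhd[OF p(1)] by blast
  moreover have "c \<in> nbhd V E p" using p assms sub by (auto simp: nbhd_def)
  ultimately show ?thesis by simp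
qed

end


lemma sum_nonzero3:
  fixes t :: "'a::ab_group_add"
  assumes big: "\<forall>s::'a. \<exists>a. a \<noteq> 0 \<and> a \<noteq> s"
    and fin: "finite S" and ne: "S \<noteq> {}" and t: "t \<noteq> 0"
  shows "\<exists>f. (\<forall>x\<in>S. f x \<noteq> 0) \<and> sum f S = t"
  using fin ne t
proof (induction S arbitrary: t rule: finite_ne_induct)
  case (singleton x)
  then show ?case by (intro exI[of _ "\<lambda>_. t"]) simp
next
  case (insert x F)
  obtain a where a: "a \<noteq> 0" "a \<noteq> t" using big by blast
  then have "t - a \<noteq> 0" by simp
  then obtain f where f: "\<forall>x\<in>F. f x \<noteq> 0" "sum f F = t - a" using insert.IH by blast
  have "sum (f(x:=a)) F = sum f F" using insert.hyps by (intro sum.cong) auto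
  then have "sum (f(x:=a)) (insert x F) = t" using insert.hyps f by simp
  moreover have "\<forall>y\<in>insert x F. (f(x:=a)) y \<noteq> 0" using f a by simp
  ultimately show ?case by blast
qed

lemma sum_odd:
  fixes t :: "'a::ab_group_add"
  assumes t: "t \<noteq> 0"
  shows "finite S \<Longrightarrow> card S = 2*k+1 \<Longrightarrow> \<exists>f. (\<forall>x\<in>S. f x \<noteq> 0) \<and> sum f S = t"
proof (induction k arbitrary: S)
  case 0
  then obtain x where "S = {x}" using card_1_singletonE by auto
  then show ?case using t by (intro exI[of _ "\<lambda>_. t"]) simp
next
  case (Suc k)
  then have "S \<noteq> {}" by auto
  then obtain x where x: "x \<in> S" by blast
  have cx: "card (S - {x}) = 2*k+2" using Suc.prems x by simp
  have "S - {x} \<noteq> {}"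
  proof
    assume h: "S - {x} = {}"
    have "card (S - {x}) = 0" unfolding h by (rule card.empty)
    then show False using cx by simp
  qed
  then obtain y where y: "y \<in> S - {x}" by blast
  define S' where "S' = S - {x} - {y}"
  have cS: "card S' = 2*k+1" using y \<open>card (S - {x}) = 2*k+2\<close> Suc.prems(1) by (simp add: S'_def)
  then obtain f where f: "\<forall>z\<in>S'. f z \<noteq> 0" "sum f S' = t" using Suc.IH[of S'] Suc.prems(1) S'_def by auto
  define g where "g = f(x:=t, y:= -t)"
  have S: "S = insert x (insert y S')" using x y by (auto simp: S'_def)
  have fS': "finite S'" using Suc.prems(1) by (simp add: S'_def)
  have xy: "x \<noteq> y" "x \<notin> S'" "y \<notin> S'" using y by (auto simp: S'_def)
  have "sum g S' = sum f S'" using xy by (intro sum.cong) (auto simp: g_def)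
  then have "sum g S = t" using S fS' xy f by (simp add: g_def)
  moreover have "\<forall>z\<in>S. g z \<noteq> 0" using f t S by (auto simp: g_def)
  ultimately show ?case by blast
qed

context gsun
begin

lemma construct:
  fixes \<mu> :: "'a::ab_group_add"
  assumes mu: "\<mu> \<noteq> 0"
    and ex: "\<forall>c\<in>set xs. \<exists>f. (\<forall>x\<in>P c. f x \<noteq> 0) \<and> sum f (P c) = - \<mu>"
  shows "A_vertex_magic TYPE('a) V E"
proof -
  define F where "F c = (SOME f. (\<forall>x\<in>P c. f x \<noteq> 0) \<and> sum f (P c) = - \<mu>)" for c
  have F: "(\<forall>x\<in>P c. F c x \<noteq> 0) \<and> sum (F c) (P c) = - \<mu>" if "c \<in> set xs" for c
    unfolding F_def using someI_ex[OF ex[rule_format, OF that]] .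
  define nb where "nb v = (SOME c. E v c)" for v
  define l where "l v = (if v \<in> set xs then \<mu> else F (nb v) v)" for v
  have nbP: "nb p = c" if "c \<in> set xs" "p \<in> P c" for c p
  proof -
    have "nbhd V E p = {c}" by (rule P_nbhd[OF that])
    then have "\<forall>u. E p u \<longleftrightarrow> u = c" using EV by (auto simp: nbhd_def)
    then have "E p = (\<lambda>u. u = c)" by blast
    then show ?thesis unfolding nb_def by simp
  qed
  have offP: "\<exists>c\<in>set xs. v \<in> P c \<and> nbhd V E v = {c}" if vv: "v \<in> V - set xs" for v
  proof -
    obtain c where c: "c \<in> set xs" "nbhd V E v = {c}" using off_nbhd[OF vv] by blast
    then have "E v c" by (auto simp: nbhd_def)
    then have "v \<in> P c" using symE vv by (auto simp: P_def nbhd_def)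
    then show ?thesis using c by blast
  qed
  have "vertex_magic_labeling V E l"
    unfolding vertex_magic_labeling_def
  proof (intro conjI ballI exI[of _ \<mu>])
    fix v assume v: "v \<in> V"
    show "l v \<noteq> 0"
    proof (cases "v \<in> set xs")
      case True then show ?thesis using mu by (simp add: l_def)
    next
      case False
      then obtain c where c: "c \<in> set xs" "v \<in> P c" using offP v by blast
      then show ?thesis using F[OF c(1)] nbP[OF c] False by (simp add: l_def)
    qed
    show "(\<Sum>u\<in>nbhd V E v. l u) = \<mu>"
    proof (cases "v \<in> set xs")
      case False
      then obtain c where c: "c \<in> set xs" "nbhd V E v = {c}" using offP v by blast
      then show ?thesis by (simp add: l_def)
    next
      case True
      then obtain i where i: "i < n" "v = xs!i" by (auto simp: in_set_conv_nth)
      have inx: "nx i \<in> set xs" "pv i \<in> set xs" using modlt by (auto simp: nx_def pv_def)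
      have "sum l (P v) = sum (F v) (P v)"
        using nbP[OF True] by (intro sum.cong) (auto simp: l_def P_def)
      also have "\<dots> = - \<mu>" using F[OF True] by simp
      finally have sP: "sum l (P v) = - \<mu>" .
      have e: "nbhd V E v = {nx i, pv i} \<union> P v" and d: "{nx i, pv i} \<inter> P v = {}"
        using nbhd_split[OF i(1)] i(2) by auto
      have "(\<Sum>u\<in>nbhd V E v. l u) = sum l {nx i, pv i} + sum l (P v)"
        unfolding e using sum.union_disjoint[OF _ P_fin d] by simp
      also have "\<dots> = \<mu> + \<mu> + - \<mu>" using sP nx_pv[OF i(1)] inx by (simp add: l_def)
      finally show ?thesis by simp
    qed
  qed
  then show ?thesis unfolding A_vertex_magic_def by blast
qed

lemma forward:
  fixes l :: "'v \<Rightarrow> 'a::ab_group_add"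
  assumes lab: "vertex_magic_labeling V E l"
  shows "\<forall>c\<in>set xs. P c \<noteq> {}"
proof -
  obtain \<mu> where nz: "\<forall>v\<in>V. l v \<noteq> 0" and mu: "\<forall>v\<in>V. (\<Sum>u\<in>nbhd V E v. l u) = \<mu>"
    using lab unfolding vertex_magic_labeling_def by blast
  have supl: "l c = \<mu>" if cc: "c \<in> set xs" "P c \<noteq> {}" for c
  proof -
    obtain p where p: "p \<in> P c" using cc by blast
    then have "p \<in> V" by (auto simp: P_def nbhd_def)
    then show ?thesis using mu P_nbhd[OF cc(1) p] by auto
  qed
  obtain v where v: "v \<in> V - set xs" using nonc by blast
  obtain c0 where c0: "c0 \<in> set xs" "nbhd V E v = {c0}" using off_nbhd[OF v] by blast
  have "v \<in> P c0" using c0 v symE by (auto simp: P_def nbhd_def)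
  then have Pc0: "P c0 \<noteq> {}" by blast
  obtain i0 where i0: "i0 < n" "c0 = xs!i0" using c0 by (auto simp: in_set_conv_nth)
  have step: "P (xs!((i+1) mod n)) \<noteq> {}" if i: "i < n" "P (xs!i) \<noteq> {}" for i
  proof (rule ccontr)
    assume em: "\<not> P (xs!((i+1) mod n)) \<noteq> {}"
    define j where "j = (i+1) mod n"
    have j: "j < n" using modlt by (simp add: j_def)
    have pvj: "pv j = xs!i"
    proof (cases "i + 1 < n")
      case True
      then have "j = i + 1" by (simp add: j_def)
      then show ?thesis using i(1) by (simp add: pv_def)
    next
      case False
      then have "i + 1 = n" using i by simp
      then have "j = 0" by (simp add: j_def)
      then have "(j+n-1) mod n = i" using \<open>i+1 = n\<close> by simp
      then show ?thesis by (simp add: pv_def)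
    qed
    have nb: "nbhd V E (xs!j) = {nx j, pv j}" using nbhd_split[OF j] em by (simp add: j_def)
    have "xs!j \<in> V" using j sub by auto
    then have "l (nx j) + l (pv j) = \<mu>" using mu nb nx_pv[OF j] by auto
    moreover have "l (pv j) = \<mu>" using pvj supl i by simp
    ultimately have "l (nx j) = 0" by simp
    moreover have "nx j \<in> V" using sub modlt by (auto simp: nx_def)
    ultimately show False using nz by auto
  qed
  have all: "P (xs!((i0+m) mod n)) \<noteq> {}" for m
  proof (induction m)
    case 0 then show ?case using Pc0 i0 by simp
  next
    case (Suc m)
    have "P (xs!(((i0+m) mod n + 1) mod n)) \<noteq> {}" using step[OF modlt Suc.IH] .
    moreover have "((i0+m) mod n + 1) mod n = (i0 + Suc m) mod n" by (simp add: mod_Suc_eq)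
    ultimately show ?case by simp
  qed
  show ?thesis
  proof
    fix c assume "c \<in> set xs"
    then obtain k where k: "k < n" "c = xs!k" by (auto simp: in_set_conv_nth)
    have "(i0 + (k + n - i0)) mod n = k" using i0 k by simp
    then show "P c \<noteq> {}" using all[of "k + n - i0"] k by simp
  qed
qed

lemma degree_cycle: assumes "c \<in> set xs" shows "degree V E c = 2 + card (P c)"
proof -
  obtain i where i: "i < n" "c = xs!i" using assms by (auto simp: in_set_conv_nth)
  have e: "nbhd V E c = {nx i, pv i} \<union> P c" and d: "{nx i, pv i} \<inter> P c = {}"
    using nbhd_split[OF i(1)] i(2) by auto
  have "degree V E c = card {nx i, pv i} + card (P c)"
    unfolding degree_def e using card_Un_disjoint[OF _ P_fin d] by simp
  then show ?thesis using nx_pv[OF i(1)] by simp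
qed

end


lemma big_of:
  assumes "infinite (UNIV :: 'a::ab_group_add set) \<or> card (UNIV :: 'a set) \<ge> 3"
  shows "\<forall>s::'a. \<exists>a. a \<noteq> 0 \<and> a \<noteq> s"
proof
  fix s :: 'a
  show "\<exists>a. a \<noteq> 0 \<and> a \<noteq> s"
  proof (rule ccontr)
    assume "\<not> ?thesis"
    then have sub: "(UNIV :: 'a set) \<subseteq> {0, s}" by blast
    have fin: "finite (UNIV :: 'a set)" using finite_subset[OF sub] by simp
    have "card (UNIV :: 'a set) \<le> card {0, s}" using card_mono[OF _ sub] by simp
    also have "\<dots> \<le> 2" by (simp add: card_insert_le_m1)
    finally show False using assms fin by simp
  qed
qed

theorem lemma2p5:
  fixes V :: "'v set" and E :: "'v \<Rightarrow> 'v \<Rightarrow> bool"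
  assumes "generalized_sun V E"
  shows "((infinite (UNIV :: 'a::ab_group_add set) \<or> card (UNIV :: 'a set) \<ge> 3) \<longrightarrow>
            (A_vertex_magic TYPE('a) V E \<longleftrightarrow>
               (\<forall>v\<in>V. \<not> pendant V E v \<longrightarrow> support_vertex V E v)))
       \<and> ((\<forall>v\<in>V. \<not> pendant V E v \<longrightarrow> support_vertex V E v \<and> odd (degree V E v)) \<longrightarrow>
            (\<exists>x y :: 'b::ab_group_add. x \<noteq> y) \<longrightarrow> A_vertex_magic TYPE('b) V E)"
proof -
  obtain xs where g: "gsun V E xs" using gsun_from[OF assms] by blast
  interpret gsun V E xs by (rule g)
  have part1: "A_vertex_magic TYPE('a) V E \<longleftrightarrow>
               (\<forall>v\<in>V. \<not> pendant V E v \<longrightarrow> support_vertex V E v)"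
    if H: "infinite (UNIV :: 'a::ab_group_add set) \<or> card (UNIV :: 'a set) \<ge> 3"
  proof
    assume "A_vertex_magic TYPE('a) V E"
    then obtain l :: "'v \<Rightarrow> 'a" where "vertex_magic_labeling V E l"
      unfolding A_vertex_magic_def by blast
    then have fw: "\<forall>c\<in>set xs. P c \<noteq> {}" by (rule forward)
    show "\<forall>v\<in>V. \<not> pendant V E v \<longrightarrow> support_vertex V E v"
    proof (intro ballI impI)
      fix v assume v: "v \<in> V" "\<not> pendant V E v"
      then have vx: "v \<in> set xs" using pendant_iff[OF v(1)] by simp
      then show "support_vertex V E v" using support_iff[OF vx] fw by simp
    qed
  next
    assume sv: "\<forall>v\<in>V. \<not> pendant V E v \<longrightarrow> support_vertex V E v"
    have big: "\<forall>s::'a. \<exists>a. a \<noteq> 0 \<and> a \<noteq> s" by (rule big_of[OF H])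
    then obtain \<mu> :: 'a where mu: "\<mu> \<noteq> 0" by blast
    show "A_vertex_magic TYPE('a) V E"
    proof (rule construct[OF mu])
      show "\<forall>c\<in>set xs. \<exists>f. (\<forall>x\<in>P c. f x \<noteq> 0) \<and> sum f (P c) = - \<mu>"
      proof
        fix c assume c: "c \<in> set xs"
        have cV: "c \<in> V" using c sub by blast
        have "\<not> pendant V E c" using pendant_iff[OF cV] c by simp
        then have "support_vertex V E c" using sv cV by blast
        then have "P c \<noteq> {}" using support_iff[OF c] by simp
        then show "\<exists>f. (\<forall>x\<in>P c. f x \<noteq> 0) \<and> sum f (P c) = - \<mu>"
          using sum_nonzero3[OF big P_fin, of c "- \<mu>"] mu by simp
      qed
    qed
  qed
  have part2: "A_vertex_magic TYPE('b) V E"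
    if sv: "\<forall>v\<in>V. \<not> pendant V E v \<longrightarrow> support_vertex V E v \<and> odd (degree V E v)"
    and ne: "\<exists>x y :: 'b::ab_group_add. x \<noteq> y"
  proof -
    obtain x y :: 'b where "x \<noteq> y" using ne by blast
    then have mu: "x - y \<noteq> 0" by simp
    show ?thesis
    proof (rule construct[OF mu])
      show "\<forall>c\<in>set xs. \<exists>f. (\<forall>z\<in>P c. f z \<noteq> 0) \<and> sum f (P c) = - (x - y)"
      proof
        fix c assume c: "c \<in> set xs"
        have cV: "c \<in> V" using c sub by blast
        have "\<not> pendant V E c" using pendant_iff[OF cV] c by simp
        then have "odd (degree V E c)" using sv cV by blast
        then have "odd (card (P c))" using degree_cycle[OF c] by simp
        then obtain k where "card (P c) = 2*k+1" using oddE by blast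
        then show "\<exists>f. (\<forall>z\<in>P c. f z \<noteq> 0) \<and> sum f (P c) = - (x - y)"
          using sum_odd[of "- (x - y)" "P c" k] mu P_fin by simp
      qed
    qed
  qed
  show ?thesis using part1 part2 by blast
qed


end
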